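(* Let $A\in\mathbb{C}^{m\times n}$ and $B\in\mathbb{C}^{n\times p}$. For any $A^{(1)}\in\{A^{(1)}\}$ and $B^{(1)}\in\{B^{(1)}\}$, put $P=I_n-A^{(1)}A$ and $Q=I_n-BB^{(1)}$. Then for every $\{1\}$-generalized inverse $(QP)^{(1)}$ of $QP$, the matrix $$X=B^{(1)}A^{(1)}-B^{(1)}P(QP)^{(1)}QA^{(1)}$$ satisfies $ABXAB=AB$, i.e. $\{(AB)^{(1)}\}\supseteq\{B^{(1)}A^{(1)}-B^{(1)}P(QP)^{(1)}QA^{(1)}\}$.
   Context: For $X\in\mathbb{C}^{p\times q}$, a matrix $G\in\mathbb{C}^{q\times p}$ is called an $\{i,\ldots,j\}$-generalized inverse of $X$ (written $X^{(i,\ldots,j)}$) if it satisfies the equations numbered $i,\ldots,j$ among the four Penrose equations (i) $XGX=X$, (ii) $GXG=G$, (iii) $(XG)^*=XG$, (iv) $(GX)^*=GX$; $\{X^{(i,\ldots,j)}\}$ denotes the set of all such $G$. $I_n$ is the $n\times n$ identity matrix. *)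

theory Defs
  imports "HOL-Analysis.Analysis"
begin

definition g1_inverse :: "complex^'p^'q \<Rightarrow> complex^'q^'p \<Rightarrow> bool" where
  "g1_inverse G X \<longleftrightarrow> X ** G ** X = X"

end

theory Submission
  imports Defs
begin

lemma mm_ldiff: "(A::'a::comm_ring_1^'n^'m) ** (B - C) = A ** B - A ** C"
  by (vector matrix_matrix_mult_def sum_subtractf right_diff_distrib)

lemma mm_rdiff: "((B::'a::comm_ring_1^'n^'m) - C) ** A = B ** A - C ** A"
  by (vector matrix_matrix_mult_def sum_subtractf left_diff_distrib)

lemma mm_lneg: "(A::'a::comm_ring_1^'n^'m) ** (- B) = - (A ** B)"
  by (vector matrix_matrix_mult_def sum_negf)

lemma mm_rneg: "(- (B::'a::comm_ring_1^'n^'m)) ** A = - (B ** A)"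
  by (vector matrix_matrix_mult_def sum_negf)

theorem theorem3p2:
  fixes A :: "complex^'n^'m" and B :: "complex^'p^'n"
    and A1 :: "complex^'m^'n" and B1 :: "complex^'n^'p"
    and G :: "complex^'n^'n"
  assumes "g1_inverse A1 A" and "g1_inverse B1 B"
    and "g1_inverse G ((mat 1 - B ** B1) ** (mat 1 - A1 ** A))"
  shows "g1_inverse (B1 ** A1 - B1 ** (mat 1 - A1 ** A) ** G ** (mat 1 - B ** B1) ** A1) (A ** B)"
proof -
  define P where "P = (mat 1 - A1 ** A :: complex^'n^'n)"
  define Q where "Q = (mat 1 - B ** B1 :: complex^'n^'n)"
  have a: "A ** A1 ** A = A" and b: "B ** B1 ** B = B" and g: "Q ** P ** G ** (Q ** P) = Q ** P"
    using assms unfolding g1_inverse_def P_def Q_def by (auto simp: matrix_mul_assoc)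
  have AP: "A ** P = 0" unfolding P_def using a by (simp add: mm_ldiff matrix_mul_assoc)
  have QB: "Q ** B = 0" unfolding Q_def using b by (simp add: mm_rdiff matrix_mul_assoc)
  have ABB1: "A ** B ** B1 = A - A ** Q" unfolding Q_def by (simp add: mm_ldiff matrix_mul_assoc)
  have A1AB: "A1 ** (A ** B) = B - P ** B" unfolding P_def by (simp add: mm_rdiff matrix_mul_assoc)
  have t1: "A ** B ** (B1 ** A1) ** (A ** B) = A ** B + A ** Q ** P ** B"
  proof -
    have "A ** B ** (B1 ** A1) ** (A ** B) = (A ** B ** B1) ** (A1 ** (A ** B))"
      by (simp add: matrix_mul_assoc)
    also have "\<dots> = (A - A ** Q) ** (B - P ** B)" by (simp add: ABB1 A1AB)
    also have "\<dots> = A ** B - A ** P ** B - A ** Q ** B + A ** Q ** P ** B"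
      by (simp add: mm_ldiff mm_rdiff matrix_mul_assoc)
    also have "\<dots> = A ** B + A ** Q ** P ** B"
      using AP QB by (simp add: matrix_mul_assoc[symmetric])
    finally show ?thesis .
  qed
  have t2: "A ** B ** (B1 ** P ** G ** Q ** A1) ** (A ** B) = A ** Q ** P ** B"
  proof -
    have "A ** B ** (B1 ** P ** G ** Q ** A1) ** (A ** B) = (A ** B ** B1) ** P ** G ** Q ** (A1 ** (A ** B))"
      by (simp add: matrix_mul_assoc)
    also have "\<dots> = (A - A ** Q) ** P ** G ** Q ** (B - P ** B)" by (simp add: ABB1 A1AB)
    also have "\<dots> = (A ** P - A ** Q ** P) ** G ** Q ** (B - P ** B)"
      by (simp add: mm_rdiff matrix_mul_assoc)
    also have "\<dots> = (0 - A ** Q ** P) ** G ** (Q ** B - Q ** P ** B)"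
      by (simp add: AP mm_ldiff matrix_mul_assoc)
    also have "\<dots> = (A ** Q ** P) ** G ** (Q ** P ** B)"
      by (simp add: QB mm_ldiff mm_rdiff mm_lneg mm_rneg)
    also have "\<dots> = A ** (Q ** P ** G ** (Q ** P)) ** B"
      by (simp add: matrix_mul_assoc)
    also have "\<dots> = A ** Q ** P ** B" using g by (simp add: matrix_mul_assoc)
    finally show ?thesis .
  qed
  show ?thesis unfolding g1_inverse_def P_def[symmetric] Q_def[symmetric]
    using t1 t2 by (simp add: mm_ldiff mm_rdiff)
qed

end
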